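(* Let $a,b,l$ be positive integers, $\alpha\in(0,1)$, $\delta\ge0$, $\epsilon\ge0$, and $G:\mathbb{R}^k\to\mathbb{R}^n$. If $A\in\mathbb{R}^{m\times n}$ satisfies S-REC$(S_{(a+b)l/2,G'},\,1-\alpha,\,\delta)$ and RIP$(bl,\alpha)$, then for every $\eta\in T_A(\epsilon)$, $$\|\eta\|_2\le(bl)^{-1/2}(C_0+1)\,\sigma_{al,G'}(\eta)+C_1\epsilon+\delta',$$ where $C_0=(1-\alpha)^{-1}(1+\alpha)$, $C_1=(1-\alpha)^{-1}$, $\delta'=\delta(1-\alpha)^{-1}$.
   Context: For $v\in\mathbb{R}^n$ and $s\ge0$, $S_s(v)=\{x\in\mathbb{R}^n:\|x-v\|_0\le s\}$ ($\|\cdot\|_0$ counts nonzero coordinates), and $S_s=S_s(0)$. The difference function is $G'(z_1,z_2)=G(z_1)-G(z_2)$, and $S_{s,G'}=\{G(z_1)-G(z_2)+\nu: z_1,z_2\in\mathbb{R}^k,\ \nu\in S_s\}$; $\sigma_{s,G'}(x)=\inf_{\hat x\in S_{s,G'}}\|x-\hat x\|_1$. $T_A(\epsilon)=\{w\in\mathbb{R}^n:\|Aw\|_2\le\epsilon\}$. A matrix $A$ satisfies RIP$(s,\alpha)$ if $(1-\alpha)\|x\|_2\le\|Ax\|_2\le(1+\alpha)\|x\|_2$ for all $x\in S_s$. For $S\subseteq\mathbb{R}^n$, $\gamma>0$, $\delta\ge0$, $A$ satisfies S-REC$(S,\gamma,\delta)$ if $\|A(x_1-x_2)\|_2\ge\gamma\|x_1-x_2\|_2-\delta$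 for all $x_1,x_2\in S$. *)

theory Defs
  imports "HOL-Analysis.Analysis"
begin

definition l0norm :: "real ^ 'n \<Rightarrow> nat" where
  "l0norm x = card {i. x $ i \<noteq> 0}"

definition l1norm :: "real ^ 'n \<Rightarrow> real" where
  "l1norm x = (\<Sum>i\<in>UNIV. \<bar>x $ i\<bar>)"

definition sparse_around :: "real \<Rightarrow> real ^ 'n \<Rightarrow> (real ^ 'n) set" where
  "sparse_around s v = {x. real (l0norm (x - v)) \<le> s}"

abbreviation sparse_set :: "real \<Rightarrow> (real ^ 'n) set" where
  "sparse_set s \<equiv> sparse_around s 0"

definition S_diff :: "real \<Rightarrow> (real ^ 'k \<Rightarrow> real ^ 'n) \<Rightarrow> (real ^ 'n) set" where
  "S_diff s G = {G z1 - G z2 + \<nu> | z1 z2 \<nu>. \<nu> \<in> sparse_set s}"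

definition sigma_diff :: "real \<Rightarrow> (real ^ 'k \<Rightarrow> real ^ 'n) \<Rightarrow> real ^ 'n \<Rightarrow> real" where
  "sigma_diff s G x = (INF xh \<in> S_diff s G. l1norm (x - xh))"

definition T_set :: "real ^ 'n ^ 'm \<Rightarrow> real \<Rightarrow> (real ^ 'n) set" where
  "T_set A \<epsilon> = {w. norm (A *v w) \<le> \<epsilon>}"

definition RIP :: "real ^ 'n ^ 'm \<Rightarrow> real \<Rightarrow> real \<Rightarrow> bool" where
  "RIP A s \<alpha> \<longleftrightarrow> (\<forall>x \<in> sparse_set s.
      (1 - \<alpha>) * norm x \<le> norm (A *v x) \<and> norm (A *v x) \<le> (1 + \<alpha>) * norm x)"

definition SREC :: "real ^ 'n ^ 'm \<Rightarrow> (real ^ 'n) set \<Rightarrow> real \<Rightarrow> real \<Rightarrow> bool" where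
  "SREC A S \<gamma> \<delta> \<longleftrightarrow> (\<forall>x1 \<in> S. \<forall>x2 \<in> S.
      norm (A *v (x1 - x2)) \<ge> \<gamma> * norm (x1 - x2) - \<delta>)"

end

theory Submission
  imports Defs
begin

definition restr :: "'n set \<Rightarrow> real^'n \<Rightarrow> real^'n" where
  "restr B v = (\<chi> i. if i \<in> B then v$i else 0)"

lemma restr_nth[simp]: "restr B v $ i = (if i \<in> B then v$i else 0)"
  by (simp add: restr_def)

lemma restr_split: "v = restr B v + restr (-B) v"
  by (simp add: vec_eq_iff)

lemma l1_restr: "l1norm (restr B v) = (\<Sum>i\<in>B. \<bar>v$i\<bar>)"
proof -
  have "l1norm (restr B v) = (\<Sum>i\<in>UNIV. if i \<in> B then \<bar>v$i\<bar> else 0)"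
    unfolding l1norm_def by (intro sum.cong) auto
  also have "\<dots> = (\<Sum>i\<in>B. \<bar>v$i\<bar>)"
    by (simp add: sum.If_cases)
  finally show ?thesis .
qed

lemma l1_split: "l1norm v = l1norm (restr B v) + l1norm (restr (-B) v)"
  unfolding l1norm_def by (subst sum.distrib[symmetric]) (intro sum.cong, auto)

lemma l1_nonneg: "l1norm v \<ge> 0"
  unfolding l1norm_def by (simp add: sum_nonneg)

lemma l1_ge: "\<bar>v$i\<bar> \<le> l1norm v"
  unfolding l1norm_def by (rule member_le_sum) auto

lemma norm_le_supp:
  fixes v :: "real^'n"
  assumes "\<And>j. \<bar>v$j\<bar> \<le> m"
  shows "norm v \<le> sqrt (card {i. v$i \<noteq> 0}) * m"
proof -
  have m0: "m \<ge> 0" using assms[of undefined] by simp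
  have "(\<Sum>i\<in>UNIV. (v$i)\<^sup>2) = (\<Sum>i\<in>{i. v$i \<noteq> 0}. (v$i)\<^sup>2)"
    by (rule sum.mono_neutral_right) auto
  also have "\<dots> \<le> (\<Sum>i\<in>{i. v$i \<noteq> 0}. m\<^sup>2)"
  proof (rule sum_mono)
    fix i show "(v$i)\<^sup>2 \<le> m\<^sup>2" using assms[of i]
      by (metis abs_ge_zero power2_abs power_mono)
  qed
  also have "\<dots> = card {i. v$i \<noteq> 0} * m\<^sup>2" by simp
  finally have h: "(\<Sum>i\<in>UNIV. (v$i)\<^sup>2) \<le> card {i. v$i \<noteq> 0} * m\<^sup>2" .
  have "norm v = sqrt (\<Sum>i\<in>UNIV. (v$i)\<^sup>2)"
    by (simp add: norm_vec_def L2_set_def)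
  also have "\<dots> \<le> sqrt (card {i. v$i \<noteq> 0} * m\<^sup>2)" using h by simp
  also have "\<dots> = sqrt (card {i. v$i \<noteq> 0}) * m" using m0 by (simp add: real_sqrt_mult)
  finally show ?thesis .
qed

lemma top_k:
  fixes v :: "real^'n"
  shows "k \<le> CARD('n) \<Longrightarrow> \<exists>B. card B = k \<and> (\<forall>i\<in>B. \<forall>j. j \<notin> B \<longrightarrow> \<bar>v$j\<bar> \<le> \<bar>v$i\<bar>)"
proof (induction k)
  case 0 then show ?case by (intro exI[of _ "{}"]) auto
next
  case (Suc k)
  then obtain B where B: "card B = k" "\<forall>i\<in>B. \<forall>j. j \<notin> B \<longrightarrow> \<bar>v$j\<bar> \<le> \<bar>v$i\<bar>" by auto
  have "B \<noteq> UNIV" using B(1) Suc.prems by auto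
  hence ne: "-B \<noteq> {}" by auto
  define M where "M = Max ((\<lambda>j. \<bar>v$j\<bar>) ` (-B))"
  have "M \<in> (\<lambda>j. \<bar>v$j\<bar>) ` (-B)" unfolding M_def using ne by (intro Max_in) auto
  then obtain j0 where j0: "j0 \<notin> B" "\<bar>v$j0\<bar> = M" by auto
  have Mge: "\<And>j. j \<notin> B \<Longrightarrow> \<bar>v$j\<bar> \<le> M" unfolding M_def by (intro Max_ge) auto
  show ?case
  proof (intro exI[of _ "insert j0 B"] conjI)
    show "card (insert j0 B) = Suc k" using B(1) j0(1) by simp
    show "\<forall>i\<in>insert j0 B. \<forall>j. j \<notin> insert j0 B \<longrightarrow> \<bar>v$j\<bar> \<le> \<bar>v$i\<bar>"
      using B(2) Mge j0 by auto
  qed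
qed

lemma block:
  fixes F :: "real^'n \<Rightarrow> real" and N :: nat and K :: real
  assumes sub: "\<And>x y. F (x + y) \<le> F x + F y"
   and sp: "\<And>x. card {i. x$i \<noteq> 0} \<le> N \<Longrightarrow> F x \<le> K * norm x"
   and K: "K \<ge> 0" and N: "N > 0"
  shows "card {i. v$i \<noteq> 0} = n \<Longrightarrow> (\<And>j. real (N-1) * \<bar>v$j\<bar> \<le> \<beta>) \<Longrightarrow> F v \<le> K / sqrt N * (\<beta> + l1norm v)"
proof (induction n arbitrary: v \<beta> rule: less_induct)
  case (less n)
  define m where "m = Max (range (\<lambda>j. \<bar>v$j\<bar>))"
  have mge: "\<And>j. \<bar>v$j\<bar> \<le> m" unfolding m_def by (intro Max_ge) auto
  have "m \<in> range (\<lambda>j. \<bar>v$j\<bar>)" unfolding m_def by (intro Max_in) auto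
  then obtain i0 where i0: "\<bar>v$i0\<bar> = m" by auto
  have m0: "m \<ge> 0" using i0 by auto
  have hb: "real (N-1) * m \<le> \<beta>" using less.prems(2)[of i0] i0 by simp
  have sN: "sqrt N > 0" using N by simp
  have Nm: "real N * m \<le> \<beta> + l1norm v"
  proof -
    have "real N * m = real (N-1) * m + m" using N by (simp add: of_nat_diff algebra_simps)
    also have "\<dots> \<le> \<beta> + l1norm v" using hb l1_ge[of v i0] i0 by simp
    finally show ?thesis .
  qed
  have key: "sqrt N * m = real N * m / sqrt N" using sN
    by (simp add: field_simps)
  show ?case
  proof (cases "n \<le> N")
    case True
    have "F v \<le> K * norm v" using sp less.prems(1) True by simp
    also have "\<dots> \<le> K * (sqrt N * m)"
    proof (rule mult_left_mono[OF _ K])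
      have "norm v \<le> sqrt (card {i. v$i \<noteq> 0}) * m" by (rule norm_le_supp[OF mge])
      also have "\<dots> \<le> sqrt N * m" using less.prems(1) True m0 by (intro mult_right_mono) auto
      finally show "norm v \<le> sqrt N * m" .
    qed
    also have "\<dots> \<le> K / sqrt N * (\<beta> + l1norm v)"
      using key Nm K sN by (simp add: divide_right_mono mult_left_mono)
    finally show ?thesis .
  next
    case False
    let ?S = "{i. v$i \<noteq> 0}"
    have "N \<le> CARD('n)" using False less.prems(1) card_mono[of UNIV ?S] by simp
    then obtain B where B: "card B = N" "\<forall>i\<in>B. \<forall>j. j \<notin> B \<longrightarrow> \<bar>v$j\<bar> \<le> \<bar>v$i\<bar>"
      using top_k by blast
    have "\<not> ?S \<subseteq> B" using False less.prems(1) card_mono[of B ?S] B(1) by auto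
    then obtain j1 where j1: "v$j1 \<noteq> 0" "j1 \<notin> B" by auto
    have BS: "B \<subseteq> ?S" using B(2) j1 by force
    have Bne: "B \<noteq> {}" using B(1) N by auto
    obtain i1 where i1: "i1 \<in> B" "\<bar>v$i1\<bar> = m"
    proof (cases "i0 \<in> B")
      case True then show ?thesis using that i0 by auto
    next
      case False
      from Bne obtain i where "i \<in> B" by auto
      then show ?thesis using that[of i] B(2) False i0 mge[of i] by force
    qed
    define v' where "v' = restr (-B) v"
    define \<beta>' where "\<beta>' = l1norm (restr B v) - m"
    have b': "\<beta>' = (\<Sum>i\<in>B-{i1}. \<bar>v$i\<bar>)"
      unfolding \<beta>'_def l1_restr using i1 by (simp add: sum_diff1)
    have supp': "{i. v'$i \<noteq> 0} = ?S - B" unfolding v'_def by auto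
    have lt: "card {i. v'$i \<noteq> 0} < n" unfolding supp' less.prems(1)[symmetric]
      using BS Bne by (intro psubset_card_mono) auto
    have hyp': "\<And>j. real (N-1) * \<bar>v'$j\<bar> \<le> \<beta>'"
    proof -
      fix j
      show "real (N-1) * \<bar>v'$j\<bar> \<le> \<beta>'"
      proof (cases "j \<in> B")
        case True then show ?thesis unfolding v'_def b' by (simp add: sum_nonneg)
      next
        case False
        have "(\<Sum>i\<in>B-{i1}. \<bar>v$j\<bar>) \<le> (\<Sum>i\<in>B-{i1}. \<bar>v$i\<bar>)"
          using B(2) False by (intro sum_mono) auto
        moreover have "card (B - {i1}) = N - 1" using B(1) i1(1) by (simp add: card_Diff_singleton)
        ultimately show ?thesis unfolding v'_def b' using False by simp
      qed
    qed
    have IH: "F v' \<le> K / sqrt N * (\<beta>' + l1norm v')"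
      using less.IH[OF lt refl hyp'] .
    have FB: "F (restr B v) \<le> K * (sqrt N * m)"
    proof -
      have "F (restr B v) \<le> K * norm (restr B v)"
        using sp card_mono[of B "{i. restr B v $ i \<noteq> 0}"] B(1)
        by (metis (mono_tags, lifting) card_mono finite mem_Collect_eq restr_nth subsetI)
      also have "\<dots> \<le> K * (sqrt N * m)"
      proof (rule mult_left_mono[OF _ K])
        have "norm (restr B v) \<le> sqrt (card {i. restr B v$i \<noteq> 0}) * m"
          by (rule norm_le_supp) (simp add: mge m0)
        also have "\<dots> \<le> sqrt N * m" using B(1) m0
          by (intro mult_right_mono) (auto intro!: card_mono)
        finally show "norm (restr B v) \<le> sqrt N * m" .
      qed
      finally show ?thesis .
    qed
    have "F v \<le> F (restr B v) + F v'"
      using sub[of "restr B v" v'] restr_split[of v B] unfolding v'_def by simp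
    also have "\<dots> \<le> K * (sqrt N * m) + K / sqrt N * (\<beta>' + l1norm v')" using FB IH by simp
    also have "\<dots> = K / sqrt N * (real N * m - m + l1norm v)"
      unfolding key \<beta>'_def v'_def using l1_split[of v B] by (simp add: algebra_simps)
    also have "\<dots> \<le> K / sqrt N * (\<beta> + l1norm v)"
      using hb K sN N by (intro mult_left_mono) (auto simp: of_nat_diff algebra_simps)
    finally show ?thesis .
  qed
qed

lemma supp_sub_card: "card {i. (x::real^'n)$i \<noteq> 0} \<le> card S" if "{i. x$i \<noteq> 0} \<subseteq> S" for S
  using that by (intro card_mono) auto

lemma alg: fixes e d p s q L :: real assumes "s > 0" "q > 0"
  shows "(e + d + p / s * L) / q + 1 / s * L = 1 / s * (p / q + 1) * L + (1 / q * e + d / q)"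
  using assms by (simp add: field_simps)

theorem lemma4:
  fixes a b l :: nat and \<alpha> \<delta> \<epsilon> :: real
    and G :: "real ^ 'k \<Rightarrow> real ^ 'n" and A :: "real ^ 'n ^ 'm"
  assumes "a > 0" "b > 0" "l > 0"
    and "0 < \<alpha>" "\<alpha> < 1" "\<delta> \<ge> 0" "\<epsilon> \<ge> 0"
    and "SREC A (S_diff (real ((a + b) * l) / 2) G) (1 - \<alpha>) \<delta>"
    and "RIP A (real (b * l)) \<alpha>"
    and "\<eta> \<in> T_set A \<epsilon>"
  shows "norm \<eta> \<le> (1 / sqrt (real (b * l))) * ((1 + \<alpha>) / (1 - \<alpha>) + 1) * sigma_diff (real (a * l)) G \<eta>
         + (1 / (1 - \<alpha>)) * \<epsilon> + \<delta> / (1 - \<alpha>)"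
proof -
  define N where "N = b * l"
  have N0: "N > 0" unfolding N_def using assms(2,3) by simp
  have sN: "sqrt N > 0" using N0 by simp
  define c where "c = (1 / sqrt (real N)) * ((1 + \<alpha>) / (1 - \<alpha>) + 1)"
  define E where "E = (1 / (1 - \<alpha>)) * \<epsilon> + \<delta> / (1 - \<alpha>)"
  have c0: "c > 0" unfolding c_def using sN assms(4,5) by (intro mult_pos_pos) (auto intro!: add_pos_pos divide_pos_pos)
  have Aeta: "norm (A *v \<eta>) \<le> \<epsilon>" using assms(10) by (simp add: T_set_def)
  have main: "norm \<eta> \<le> c * l1norm (\<eta> - xh) + E" if xh: "xh \<in> S_diff (real (a*l)) G" for xh
  proof -
    obtain z1 z2 \<nu> where xhd: "xh = G z1 - G z2 + \<nu>" and \<nu>: "real (l0norm \<nu>) \<le> real (a*l)"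
      using xh by (auto simp: S_diff_def sparse_around_def)
    define h where "h = \<eta> - xh"
    define L where "L = l1norm h"
    obtain T where Tc: "card T \<le> N - 1"
      and Th: "\<And>j. real (N-1) * \<bar>restr (-T) h $ j\<bar> \<le> l1norm (restr T h)"
    proof (cases "N - 1 \<le> CARD('n)")
      case True
      then obtain B where B: "card B = N - 1" "\<forall>i\<in>B. \<forall>j. j \<notin> B \<longrightarrow> \<bar>h$j\<bar> \<le> \<bar>h$i\<bar>"
        using top_k by blast
      show ?thesis
      proof (rule that[of B])
        show "card B \<le> N - 1" using B by simp
        fix j
        show "real (N-1) * \<bar>restr (-B) h $ j\<bar> \<le> l1norm (restr B h)"
        proof (cases "j \<in> B")
          case True then show ?thesis by (simp add: l1_nonneg)
        next
          case False
          have "(\<Sum>i\<in>B. \<bar>h$j\<bar>) \<le> (\<Sum>i\<in>B. \<bar>h$i\<bar>)"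
            using B(2) False by (intro sum_mono) auto
          then show ?thesis using False B(1) by (simp add: l1_restr)
        qed
      qed
    next
      case False
      show ?thesis
      proof (rule that[of UNIV])
        show "card (UNIV::'n set) \<le> N - 1" using False by simp
        fix j show "real (N-1) * \<bar>restr (-UNIV) h $ j\<bar> \<le> l1norm (restr UNIV h)"
          by (simp add: l1_nonneg)
      qed
    qed
    define r where "r = restr (-T) h"
    define hT where "hT = restr T h"
    have hsplit: "h = hT + r" unfolding hT_def r_def by (rule restr_split)
    have Lsplit: "L = l1norm hT + l1norm r" unfolding L_def hT_def r_def by (rule l1_split)
    have Ar: "norm (A *v r) \<le> (1 + \<alpha>) / sqrt N * L"
    proof -
      have "norm (A *v r) \<le> (1 + \<alpha>) / sqrt N * (l1norm hT + l1norm r)"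
      proof (rule block[where F="\<lambda>x. norm (A *v x)" and N=N and K="1+\<alpha>", OF _ _ _ N0 refl])
        fix x y show "norm (A *v (x + y)) \<le> norm (A *v x) + norm (A *v y)"
          by (simp add: matrix_vector_right_distrib norm_triangle_ineq)
      next
        fix x :: "real^'n" assume "card {i. x$i \<noteq> 0} \<le> N"
        hence "x \<in> sparse_set (real (b*l))"
          by (simp add: sparse_around_def l0norm_def N_def) (metis of_nat_le_iff of_nat_mult)
        thus "norm (A *v x) \<le> (1 + \<alpha>) * norm x" using assms(9) by (simp add: RIP_def)
      next
        show "1 + \<alpha> \<ge> 0" using assms(4) by simp
      next
        fix j show "real (N-1) * \<bar>r $ j\<bar> \<le> l1norm hT" using Th unfolding r_def hT_def .
      qed
      thus ?thesis using Lsplit by simp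
    qed
    have nr: "norm r \<le> 1 / sqrt N * L"
    proof -
      have "norm r \<le> 1 / sqrt N * (l1norm hT + l1norm r)"
      proof (rule block[where F="norm" and N=N and K="1", OF _ _ _ N0 refl])
        fix x y :: "real^'n" show "norm (x + y) \<le> norm x + norm y" by (rule norm_triangle_ineq)
      next
        fix j show "real (N-1) * \<bar>r $ j\<bar> \<le> l1norm hT" using Th unfolding r_def hT_def .
      qed auto
      thus ?thesis using Lsplit by simp
    qed
    define w where "w = \<nu> + hT"
    define S where "S = {i. w$i \<noteq> 0}"
    have "S \<subseteq> {i. \<nu>$i \<noteq> 0} \<union> T" unfolding S_def w_def hT_def by auto
    hence "card S \<le> card ({i. \<nu>$i \<noteq> 0} \<union> T)" by (intro card_mono) auto
    also have "\<dots> \<le> card {i. \<nu>$i \<noteq> 0} + card T" by (rule card_Un_le)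
    also have "\<dots> \<le> a * l + (N - 1)" using \<nu> Tc by (simp add: l0norm_def) (metis add_mono of_nat_le_iff of_nat_mult)
    finally have cS: "card S \<le> a * l + (N - 1)" .
    obtain S1 where S1: "S1 \<subseteq> S" "card S1 = card S div 2"
      using obtain_subset_with_card_n[of "card S div 2" S] by auto
    define w1 where "w1 = restr S1 w"
    define w2 where "w2 = restr (-S1) w"
    have wsplit: "w = w1 + w2" unfolding w1_def w2_def by (rule restr_split)
    define x1 where "x1 = G z1 - G z2 + w1"
    define x2 where "x2 = G z2 - G z2 + (- w2)"
    have "card {i. w1$i \<noteq> 0} \<le> card S1" unfolding w1_def by (intro card_mono) auto
    hence "2 * card {i. w1$i \<noteq> 0} \<le> (a + b) * l" using S1(2) cS N0 unfolding N_def
      by (simp add: algebra_simps)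
    hence "real (2 * card {i. w1$i \<noteq> 0}) \<le> real ((a + b) * l)" by (simp only: of_nat_le_iff)
    hence x1S: "x1 \<in> S_diff (real ((a + b) * l) / 2) G"
      unfolding x1_def S_diff_def sparse_around_def l0norm_def
      by (intro CollectI exI[of _ z1] exI[of _ z2] exI[of _ w1]) simp
    have "card {i. (- w2)$i \<noteq> 0} \<le> card (S - S1)" unfolding w2_def S_def by (intro card_mono) auto
    also have "\<dots> = card S - card S1" using S1(1) by (simp add: card_Diff_subset finite_subset)
    finally have "2 * card {i. (- w2)$i \<noteq> 0} \<le> (a + b) * l" using S1(2) cS N0 unfolding N_def
      by (simp add: algebra_simps)
    hence "real (2 * card {i. (- w2)$i \<noteq> 0}) \<le> real ((a + b) * l)" by (simp only: of_nat_le_iff)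
    hence x2S: "x2 \<in> S_diff (real ((a + b) * l) / 2) G"
      unfolding x2_def S_diff_def sparse_around_def l0norm_def
      by (intro CollectI exI[of _ z2] exI[of _ z2] exI[of _ "- w2"]) simp
    define y where "y = x1 - x2"
    have yeq: "y = xh + hT" unfolding y_def x1_def x2_def xhd w_def[symmetric] wsplit
      using wsplit unfolding w_def by (simp add: algebra_simps)
    have etay: "\<eta> = y + r" using hsplit unfolding yeq h_def by (simp add: algebra_simps)
    have srec: "norm (A *v y) \<ge> (1 - \<alpha>) * norm y - \<delta>"
      using assms(8) x1S x2S unfolding SREC_def y_def by blast
    have "A *v y = A *v \<eta> - A *v r" using etay by (simp add: matrix_vector_right_distrib)
    hence "norm (A *v y) \<le> norm (A *v \<eta>) + norm (A *v r)" by (simp add: norm_triangle_ineq4)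
    hence "(1 - \<alpha>) * norm y \<le> \<epsilon> + \<delta> + (1 + \<alpha>) / sqrt N * L" using srec Aeta Ar by linarith
    hence ny: "norm y \<le> (\<epsilon> + \<delta> + (1 + \<alpha>) / sqrt N * L) / (1 - \<alpha>)"
      using assms(5) by (simp add: pos_le_divide_eq mult.commute)
    have "norm \<eta> \<le> norm y + norm r" unfolding etay by (rule norm_triangle_ineq)
    also have "\<dots> \<le> (\<epsilon> + \<delta> + (1 + \<alpha>) / sqrt N * L) / (1 - \<alpha>) + 1 / sqrt N * L" using ny nr by simp
    also have "\<dots> = c * L + E" unfolding c_def E_def using assms(5) sN
      by (intro alg) auto
    finally show ?thesis unfolding L_def h_def .
  qed
  have ne: "S_diff (real (a*l)) G \<noteq> {}"
  proof -
    have "G undefined - G undefined + 0 \<in> S_diff (real (a*l)) G"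
      unfolding S_diff_def sparse_around_def l0norm_def by (intro CollectI exI[of _ undefined] exI[of _ undefined] exI[of _ 0]) simp
    thus ?thesis by auto
  qed
  have "(norm \<eta> - E) / c \<le> sigma_diff (real (a * l)) G \<eta>"
    unfolding sigma_diff_def
  proof (rule cINF_greatest[OF ne])
    fix xh assume "xh \<in> S_diff (real (a*l)) G"
    from main[OF this] c0 show "(norm \<eta> - E) / c \<le> l1norm (\<eta> - xh)"
      by (simp add: divide_le_eq mult.commute)
  qed
  hence "norm \<eta> - E \<le> c * sigma_diff (real (a * l)) G \<eta>" using c0 by (simp add: divide_le_eq mult.commute)
  thus ?thesis unfolding c_def E_def N_def by simp
qed

end
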